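(* $t(K(11,4))=\frac{7}{4}$. Moreover, if $S$ is a vertex cut of $K(11,4)$ such that $\frac{|S|}{c(K(11,4)\setminus S)} = \frac{7}{4}$, then $S$ is the complement of a maximum independent set of $K(11,4)$.
   Context: The Kneser graph $K(n,k)$ has as vertices the $k$-element subsets of $[n]=\{1,\dots,n\}$, two vertices being adjacent iff they are disjoint. A vertex cut is a set $S$ of vertices whose removal disconnects the graph; $c(G\setminus S)$ is the number of connected components after deleting $S$; the toughness is $t(G)=\min_S |S|/c(G\setminus S)$ over vertex cuts $S$. *)

theory Defs
  imports Complex_Main
begin

definition kneser_vertices :: "nat \<Rightarrow> nat \<Rightarrow> nat set set" where
  "kneser_vertices n k = {A. A \<subseteq> {1..n} \<and> card A = k}"

definition kneser_adj :: "nat set \<Rightarrow> nat set \<Rightarrow> bool" where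
  "kneser_adj A B \<longleftrightarrow> A \<inter> B = {}"

definition conn_rel :: "('a \<Rightarrow> 'a \<Rightarrow> bool) \<Rightarrow> 'a set \<Rightarrow> ('a \<times> 'a) set" where
  "conn_rel E W = {(x, y). x \<in> W \<and> y \<in> W \<and> (\<lambda>a b. a \<in> W \<and> b \<in> W \<and> E a b)\<^sup>*\<^sup>* x y}"

definition num_components :: "'a set \<Rightarrow> ('a \<Rightarrow> 'a \<Rightarrow> bool) \<Rightarrow> 'a set \<Rightarrow> nat" where
  "num_components V E S = card ((V - S) // conn_rel E (V - S))"

definition vertex_cut :: "'a set \<Rightarrow> ('a \<Rightarrow> 'a \<Rightarrow> bool) \<Rightarrow> 'a set \<Rightarrow> bool" where
  "vertex_cut V E S \<longleftrightarrow> S \<subseteq> V \<and> num_components V E S \<ge> 2"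

definition toughness :: "'a set \<Rightarrow> ('a \<Rightarrow> 'a \<Rightarrow> bool) \<Rightarrow> real" where
  "toughness V E = Inf {real (card S) / real (num_components V E S) | S. vertex_cut V E S}"

definition independent_set :: "'a set \<Rightarrow> ('a \<Rightarrow> 'a \<Rightarrow> bool) \<Rightarrow> 'a set \<Rightarrow> bool" where
  "independent_set V E I \<longleftrightarrow> I \<subseteq> V \<and> (\<forall>x\<in>I. \<forall>y\<in>I. \<not> E x y)"

definition maximum_independent_set :: "'a set \<Rightarrow> ('a \<Rightarrow> 'a \<Rightarrow> bool) \<Rightarrow> 'a set \<Rightarrow> bool" where
  "maximum_independent_set V E I \<longleftrightarrow> independent_set V E I \<and>
     (\<forall>J. independent_set V E J \<longrightarrow> card J \<le> card I)"

end

theory Submission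
  imports Defs
begin



lemma sum_Pow_Un:
  assumes "finite P" "finite Q" "P \<inter> Q = {}"
  shows "(\<Sum>z\<in>Pow (P \<union> Q). g z) = (\<Sum>a\<in>Pow P. \<Sum>b\<in>Pow Q. g (a \<union> b))"
proof -
  have inj: "inj_on (\<lambda>(a,b). a \<union> b) (Pow P \<times> Pow Q)"
  proof (rule inj_onI, clarify)
    fix a b a' b' assume h: "a \<subseteq> P" "b \<subseteq> Q" "a' \<subseteq> P" "b' \<subseteq> Q" "a \<union> b = a' \<union> b'"
    have "a = (a \<union> b) \<inter> P" using h(1,2) assms(3) by auto
    also have "\<dots> = (a' \<union> b') \<inter> P" using h(5) by simp
    also have "\<dots> = a'" using h(3,4) assms(3) by auto
    finally have 1: "a = a'" .
    have "b = (a \<union> b) \<inter> Q" using h(1,2) assms(3) by auto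
    also have "\<dots> = (a' \<union> b') \<inter> Q" using h(5) by simp
    also have "\<dots> = b'" using h(3,4) assms(3) by auto
    finally show "a = a' \<and> b = b'" using 1 by simp
  qed
  have img: "(\<lambda>(a,b). a \<union> b) ` (Pow P \<times> Pow Q) = Pow (P \<union> Q)"
  proof
    show "(\<lambda>(a,b). a \<union> b) ` (Pow P \<times> Pow Q) \<subseteq> Pow (P \<union> Q)" by auto
    show "Pow (P \<union> Q) \<subseteq> (\<lambda>(a,b). a \<union> b) ` (Pow P \<times> Pow Q)"
    proof
      fix z assume "z \<in> Pow (P \<union> Q)"
      then have "z = (\<lambda>(a,b). a \<union> b) (z \<inter> P, z \<inter> Q)" "(z \<inter> P, z \<inter> Q) \<in> Pow P \<times> Pow Q" by auto
      then show "z \<in> (\<lambda>(a,b). a \<union> b) ` (Pow P \<times> Pow Q)" by (rule image_eqI)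
    qed
  qed
  have "(\<Sum>a\<in>Pow P. \<Sum>b\<in>Pow Q. g (a \<union> b)) = (\<Sum>x\<in>Pow P \<times> Pow Q. g ((\<lambda>(a,b). a \<union> b) x))"
    by (simp add: sum.cartesian_product split_def)
  also have "\<dots> = (\<Sum>z\<in>Pow (P \<union> Q). g z)"
    using sum.reindex[OF inj, of g] img by simp
  finally show ?thesis by simp
qed

lemma sum_Pow_card:
  assumes "finite X"
  shows "(\<Sum>a\<in>Pow X. (k (card a)::real)) = (\<Sum>p=0..card X. of_nat (card X choose p) * k p)"
proof -
  have im: "card ` Pow X \<subseteq> {0..card X}"
  proof
    fix n assume "n \<in> card ` Pow X"
    then obtain a where "a \<subseteq> X" "n = card a" by auto
    then show "n \<in> {0..card X}" using card_mono[OF assms] by auto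
  qed
  have "(\<Sum>a\<in>Pow X. k (card a)) = (\<Sum>p=0..card X. \<Sum>a\<in>{a. a \<in> Pow X \<and> card a = p}. k (card a))"
    by (rule sum.group[symmetric]) (use assms im in auto)
  also have "\<dots> = (\<Sum>p=0..card X. of_nat (card X choose p) * k p)"
  proof (rule sum.cong[OF refl])
    fix p
    have "(\<Sum>a\<in>{a. a \<in> Pow X \<and> card a = p}. k (card a)) = (\<Sum>a\<in>{a. a \<subseteq> X \<and> card a = p}. k p)"
      by (rule sum.cong) auto
    also have "\<dots> = of_nat (card X choose p) * k p"
      using n_subsets[OF assms, of p] by simp
    finally show "(\<Sum>a\<in>{a. a \<in> Pow X \<and> card a = p}. k (card a)) = of_nat (card X choose p) * k p" .
  qed
  finally show ?thesis .
qed




definition KK :: "(nat \<Rightarrow> nat \<Rightarrow> real) \<Rightarrow> nat \<Rightarrow> nat \<Rightarrow> nat \<Rightarrow> nat \<Rightarrow> real" where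
  "KK h p1 p2 p3 p4 = (if p1+p2+p3+p4 = 4 then h (p1+p2) (p1+p3) else 0)"

definition KF :: "(nat \<Rightarrow> nat \<Rightarrow> real) \<Rightarrow> nat \<Rightarrow> real" where
  "KF h i = (\<Sum>p1=0..i. of_nat (i choose p1) * (\<Sum>p2=0..4-i. of_nat ((4-i) choose p2) *
     (\<Sum>p3=0..4-i. of_nat ((4-i) choose p3) * (\<Sum>p4=0..3+i. of_nat ((3+i) choose p4) * KK h p1 p2 p3 p4))))"

lemma V_def': "kneser_vertices 11 4 = {z \<in> Pow {1..11}. card z = 4}"
  unfolding kneser_vertices_def by (simp only: Pow_iff)

lemma KER:
  assumes x: "x \<in> kneser_vertices 11 4" and y: "y \<in> kneser_vertices 11 4"
  shows "(\<Sum>z\<in>kneser_vertices 11 4. h (card (x \<inter> z)) (card (y \<inter> z))) = KF h (card (x \<inter> y))"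
proof -
  define U where "U = {1..11::nat}"
  define X1 where "X1 = x \<inter> y"
  define X2 where "X2 = x - y"
  define X3 where "X3 = y - x"
  define X4 where "X4 = U - (x \<union> y)"
  define i where "i = card (x \<inter> y)"
  have xU: "x \<subseteq> U" and yU: "y \<subseteq> U" and cx: "card x = 4" and cy: "card y = 4"
    using x y unfolding kneser_vertices_def U_def by auto
  have finU0: "finite U" unfolding U_def by (rule finite_atLeastAtMost)
  have fx: "finite x" and fy: "finite y" using finite_subset[OF xU finU0] finite_subset[OF yU finU0] by auto
  have fin: "finite X1" "finite X2" "finite X3" "finite X4"
    unfolding X1_def X2_def X3_def X4_def using fx fy finU0 by auto
  have cU: "card U = 11" unfolding U_def by (simp only: card_atLeastAtMost)
  have c1: "card X1 = i" unfolding X1_def i_def ..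
  have c2: "card X2 = 4 - i" unfolding X2_def i_def using cx fx card_Diff_subset_Int[of x y] by simp
  have c3: "card X3 = 4 - i" unfolding X3_def i_def using cy fy card_Diff_subset_Int[of y x]
    by (simp add: Int_commute)
  have cxy: "card (x \<union> y) = 8 - i"
    using card_Un_Int[OF fx fy] cx cy unfolding i_def by simp
  have c4: "card X4 = 3 + i"
  proof -
    have "card X4 = card U - card (x \<union> y)" unfolding X4_def
      by (rule card_Diff_subset) (use fx fy xU yU in auto)
    moreover have "i \<le> 4" unfolding i_def using cx card_mono[OF fx, of "x \<inter> y"] by auto
    ultimately show ?thesis using cU cxy by simp
  qed
  have Ueq: "U = (X1 \<union> X2) \<union> (X3 \<union> X4)" unfolding X1_def X2_def X3_def X4_def using xU yU by auto
  have x12: "X1 \<union> X2 = x" unfolding X1_def X2_def by auto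
  define G where "G z = (if card z = 4 then h (card (x \<inter> z)) (card (y \<inter> z)) else 0)" for z
  have "(\<Sum>z\<in>kneser_vertices 11 4. h (card (x \<inter> z)) (card (y \<inter> z))) = (\<Sum>z\<in>Pow U. G z)"
  proof -
    have VU: "kneser_vertices 11 4 = {z\<in>Pow U. card z = 4}" unfolding V_def' U_def ..
    have "(\<Sum>z\<in>Pow U. G z) = (\<Sum>z\<in>{z\<in>Pow U. card z = 4}. h (card (x \<inter> z)) (card (y \<inter> z)))"
      unfolding G_def by (rule sum.inter_filter[symmetric]) (simp add: finU0)
    then show ?thesis unfolding VU by (rule sym)
  qed
  also have "\<dots> = (\<Sum>a\<in>Pow (X1 \<union> X2). \<Sum>b\<in>Pow (X3 \<union> X4). G (a \<union> b))"
    unfolding Ueq by (rule sum_Pow_Un) (use fin in \<open>auto simp: X1_def X2_def X3_def X4_def\<close>)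
  also have "\<dots> = (\<Sum>a1\<in>Pow X1. \<Sum>a2\<in>Pow X2. \<Sum>a3\<in>Pow X3. \<Sum>a4\<in>Pow X4. G ((a1 \<union> a2) \<union> (a3 \<union> a4)))"
  proof -
    have d12: "X1 \<inter> X2 = {}" and d34: "X3 \<inter> X4 = {}" unfolding X1_def X2_def X3_def X4_def by auto
    have inner: "(\<Sum>b\<in>Pow (X3 \<union> X4). G (a \<union> b)) = (\<Sum>a3\<in>Pow X3. \<Sum>a4\<in>Pow X4. G (a \<union> (a3 \<union> a4)))" for a
      by (rule sum_Pow_Un[OF fin(3) fin(4) d34])
    have "(\<Sum>a\<in>Pow (X1 \<union> X2). \<Sum>b\<in>Pow (X3 \<union> X4). G (a \<union> b))
        = (\<Sum>a\<in>Pow (X1 \<union> X2). \<Sum>a3\<in>Pow X3. \<Sum>a4\<in>Pow X4. G (a \<union> (a3 \<union> a4)))"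
      by (simp only: inner)
    also have "\<dots> = (\<Sum>a1\<in>Pow X1. \<Sum>a2\<in>Pow X2. \<Sum>a3\<in>Pow X3. \<Sum>a4\<in>Pow X4. G ((a1 \<union> a2) \<union> (a3 \<union> a4)))"
      by (rule sum_Pow_Un[OF fin(1) fin(2) d12])
    finally show ?thesis .
  qed
  also have "\<dots> = (\<Sum>a1\<in>Pow X1. \<Sum>a2\<in>Pow X2. \<Sum>a3\<in>Pow X3. \<Sum>a4\<in>Pow X4. KK h (card a1) (card a2) (card a3) (card a4))"
  proof (intro sum.cong refl)
    fix a1 a2 a3 a4 assume a: "a1 \<in> Pow X1" "a2 \<in> Pow X2" "a3 \<in> Pow X3" "a4 \<in> Pow X4"
    have fa: "finite a1" "finite a2" "finite a3" "finite a4" using a fin finite_subset by auto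
    have d: "a1 \<inter> a2 = {}" "(a1 \<union> a2) \<inter> (a3 \<union> a4) = {}" "a3 \<inter> a4 = {}" "a1 \<inter> a3 = {}"
      using a unfolding X1_def X2_def X3_def X4_def by auto
    have "card ((a1 \<union> a2) \<union> (a3 \<union> a4)) = card a1 + card a2 + card a3 + card a4"
      using fa d by (simp add: card_Un_disjoint)
    moreover have "x \<inter> ((a1 \<union> a2) \<union> (a3 \<union> a4)) = a1 \<union> a2"
      using a unfolding X1_def X2_def X3_def X4_def by auto
    moreover have "y \<inter> ((a1 \<union> a2) \<union> (a3 \<union> a4)) = a1 \<union> a3"
      using a unfolding X1_def X2_def X3_def X4_def by auto
    ultimately show "G ((a1 \<union> a2) \<union> (a3 \<union> a4)) = KK h (card a1) (card a2) (card a3) (card a4)"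
      unfolding G_def KK_def using fa d by (simp add: card_Un_disjoint)
  qed
  also have "\<dots> = KF h i"
  proof -
    define k3 where "k3 c1 c2 c3 = (\<Sum>p4=0..3+i. of_nat ((3+i) choose p4) * KK h c1 c2 c3 p4)" for c1 c2 c3
    define k2 where "k2 c1 c2 = (\<Sum>p3=0..4-i. of_nat ((4-i) choose p3) * k3 c1 c2 p3)" for c1 c2
    define k1 where "k1 c1 = (\<Sum>p2=0..4-i. of_nat ((4-i) choose p2) * k2 c1 p2)" for c1
    have s4: "(\<Sum>a4\<in>Pow X4. KK h c1 c2 c3 (card a4)) = k3 c1 c2 c3" for c1 c2 c3
      unfolding k3_def using sum_Pow_card[OF fin(4), of "KK h c1 c2 c3"] c4 by simp
    have s3: "(\<Sum>a3\<in>Pow X3. k3 c1 c2 (card a3)) = k2 c1 c2" for c1 c2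
      unfolding k2_def using sum_Pow_card[OF fin(3), of "k3 c1 c2"] c3 by simp
    have s2: "(\<Sum>a2\<in>Pow X2. k2 c1 (card a2)) = k1 c1" for c1
      unfolding k1_def using sum_Pow_card[OF fin(2), of "k2 c1"] c2 by simp
    have kf: "KF h i = (\<Sum>p1=0..i. of_nat (i choose p1) * k1 p1)"
      unfolding KF_def k1_def k2_def k3_def ..
    have s1: "(\<Sum>a1\<in>Pow X1. k1 (card a1)) = KF h i"
      unfolding kf using sum_Pow_card[OF fin(1), of "k1"] c1 by simp
    show ?thesis by (simp only: s4 s3 s2 s1)
  qed
  finally show ?thesis unfolding i_def .
qed




definition phi1 :: "nat \<Rightarrow> real" where
  "phi1 r = (if r = 0 then -16 else if r = 1 then -5 else if r = 2 then 6 else if r = 3 then 17 else 28)"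
definition phi2 :: "nat \<Rightarrow> real" where
  "phi2 r = (if r = 0 then 4 else if r = 1 then -1 else if r = 2 then -1 else if r = 3 then 4 else 14)"
definition phi3 :: "nat \<Rightarrow> real" where
  "phi3 r = (if r = 0 then -16 else if r = 1 then 11 else if r = 2 then -10 else if r = 3 then 5 else 140)"
definition phi4 :: "nat \<Rightarrow> real" where
  "phi4 r = (if r = 0 then 3 else if r = 1 then -3 else if r = 2 then 5 else if r = 3 then -15 else 105)"

lemma le4_cases: "(i::nat) \<le> 4 \<Longrightarrow> i = 0 \<or> i = 1 \<or> i = 2 \<or> i = 3 \<or> i = 4" by auto

lemma KF_phi1: "i \<le> 4 \<Longrightarrow> KF (\<lambda>r s. phi1 r * phi1 s) i = 924 * phi1 i"
  by (drule le4_cases) (auto simp: KF_def KK_def phi1_def numeral_eq_Suc)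
lemma KF_phi2: "i \<le> 4 \<Longrightarrow> KF (\<lambda>r s. phi2 r * phi2 s) i = 105 * phi2 i"
  by (drule le4_cases) (auto simp: KF_def KK_def phi2_def numeral_eq_Suc)
lemma KF_phi3: "i \<le> 4 \<Longrightarrow> KF (\<lambda>r s. phi3 r * phi3 s) i = 420 * phi3 i"
  by (drule le4_cases) (auto simp: KF_def KK_def phi3_def numeral_eq_Suc)
lemma KF_phi4: "i \<le> 4 \<Longrightarrow> KF (\<lambda>r s. phi4 r * phi4 s) i = 210 * phi4 i"
  by (drule le4_cases) (auto simp: KF_def KK_def phi4_def numeral_eq_Suc)




abbreviation "VV \<equiv> kneser_vertices 11 4"

lemma VV_fin: "finite VV"
proof -
  have "VV \<subseteq> Pow {1..11}" unfolding kneser_vertices_def by auto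
  then show ?thesis by (rule finite_subset) simp
qed

lemma VV_card_le: "x \<in> VV \<Longrightarrow> card (x \<inter> y) \<le> 4"
proof -
  assume x: "x \<in> VV"
  then have "finite x" "card x = 4" unfolding kneser_vertices_def
    using finite_subset[of x "{1..11}"] by auto
  then show ?thesis using card_mono[of x "x \<inter> y"] by auto
qed

lemma VV_card4: "x \<in> VV \<Longrightarrow> y \<in> VV \<Longrightarrow> card (x \<inter> y) = 4 \<longleftrightarrow> x = y"
proof -
  assume x: "x \<in> VV" and y: "y \<in> VV"
  then have fx: "finite x" "card x = 4" and fy: "finite y" "card y = 4" unfolding kneser_vertices_def
    using finite_subset[of x "{1..11}"] finite_subset[of y "{1..11}"] by auto
  show ?thesis
  proof
    assume c: "card (x \<inter> y) = 4"
    have "x \<inter> y = x" using card_subset_eq[OF fx(1), of "x \<inter> y"] c fx by auto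
    moreover have "x \<inter> y = y" using card_subset_eq[OF fy(1), of "x \<inter> y"] c fy by auto
    ultimately show "x = y" by simp
  qed (use fx in simp)
qed

lemma VV_card0: "x \<in> VV \<Longrightarrow> card (x \<inter> y) = 0 \<longleftrightarrow> x \<inter> y = {}"
proof -
  assume x: "x \<in> VV"
  then have "finite x" unfolding kneser_vertices_def using finite_subset[of x "{1..11}"] by auto
  then show ?thesis by simp
qed

lemma sos_form:
  "(\<Sum>z\<in>VV. (\<Sum>x\<in>VV. f x * phi (card (x \<inter> z)))^2) =
   (\<Sum>x\<in>VV. \<Sum>y\<in>VV. f x * f y * KF (\<lambda>r s. phi r * phi s) (card (x \<inter> y)))"
proof -
  have "(\<Sum>z\<in>VV. (\<Sum>x\<in>VV. f x * phi (card (x \<inter> z)))^2) =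
        (\<Sum>z\<in>VV. \<Sum>x\<in>VV. \<Sum>y\<in>VV. f x * f y * (phi (card (x \<inter> z)) * phi (card (y \<inter> z))))"
    by (simp add: power2_eq_square sum_product mult_ac)
  also have "\<dots> = (\<Sum>x\<in>VV. \<Sum>z\<in>VV. \<Sum>y\<in>VV. f x * f y * (phi (card (x \<inter> z)) * phi (card (y \<inter> z))))"
    by (rule sum.swap)
  also have "\<dots> = (\<Sum>x\<in>VV. \<Sum>y\<in>VV. \<Sum>z\<in>VV. f x * f y * (phi (card (x \<inter> z)) * phi (card (y \<inter> z))))"
    by (rule sum.cong[OF refl]) (rule sum.swap)
  also have "\<dots> = (\<Sum>x\<in>VV. \<Sum>y\<in>VV. f x * f y * KF (\<lambda>r s. phi r * phi s) (card (x \<inter> y)))"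
  proof (intro sum.cong refl)
    fix x y assume "x \<in> VV" "y \<in> VV"
    then show "(\<Sum>z\<in>VV. f x * f y * (phi (card (x \<inter> z)) * phi (card (y \<inter> z)))) =
               f x * f y * KF (\<lambda>r s. phi r * phi s) (card (x \<inter> y))"
      by (simp add: sum_distrib_left[symmetric] KER[of x y "\<lambda>r s. phi r * phi s"])
  qed
  finally show ?thesis .
qed

definition Qf :: "(nat set \<Rightarrow> real) \<Rightarrow> real" where
  "Qf f = (\<Sum>x\<in>VV. \<Sum>y\<in>VV. if x \<inter> y = {} then f x * f y else 0)"

lemma kernel_split:
  fixes a b c :: real
  shows "(\<Sum>x\<in>VV. \<Sum>y\<in>VV. f x * f y * (a * (if card (x \<inter> y) = 0 then 1 else 0)
            + b * (if card (x \<inter> y) = 4 then 1 else 0) + c)) =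
         a * Qf f + b * (\<Sum>x\<in>VV. (f x)^2) + c * (\<Sum>x\<in>VV. f x)^2"
proof -
  have 1: "(\<Sum>x\<in>VV. \<Sum>y\<in>VV. f x * f y * (if card (x \<inter> y) = 0 then 1 else 0)) = Qf f"
    unfolding Qf_def by (intro sum.cong refl) (simp add: VV_card0)
  have 2: "(\<Sum>x\<in>VV. \<Sum>y\<in>VV. f x * f y * (if card (x \<inter> y) = 4 then 1 else 0)) = (\<Sum>x\<in>VV. (f x)^2)"
  proof (intro sum.cong refl)
    fix x assume x: "x \<in> VV"
    have "(\<Sum>y\<in>VV. f x * f y * (if card (x \<inter> y) = 4 then 1 else 0)) = (\<Sum>y\<in>VV. if y = x then f x * f y else 0)"
      by (intro sum.cong refl) (use x VV_card4 in auto)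
    also have "\<dots> = (f x)^2" using x VV_fin by (simp add: power2_eq_square)
    finally show "(\<Sum>y\<in>VV. f x * f y * (if card (x \<inter> y) = 4 then 1 else 0)) = (f x)^2" .
  qed
  have 3: "(\<Sum>x\<in>VV. \<Sum>y\<in>VV. f x * f y) = (\<Sum>x\<in>VV. f x)^2"
    by (simp add: power2_eq_square sum_product)
  have "(\<Sum>x\<in>VV. \<Sum>y\<in>VV. f x * f y * (a * (if card (x \<inter> y) = 0 then 1 else 0)
            + b * (if card (x \<inter> y) = 4 then 1 else 0) + c)) =
        a * (\<Sum>x\<in>VV. \<Sum>y\<in>VV. f x * f y * (if card (x \<inter> y) = 0 then 1 else 0))
      + b * (\<Sum>x\<in>VV. \<Sum>y\<in>VV. f x * f y * (if card (x \<inter> y) = 4 then 1 else 0))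
      + c * (\<Sum>x\<in>VV. \<Sum>y\<in>VV. f x * f y)"
  proof -
    have "(\<Sum>x\<in>VV. \<Sum>y\<in>VV. f x * f y * (a * (if card (x \<inter> y) = 0 then 1 else 0)
            + b * (if card (x \<inter> y) = 4 then 1 else 0) + c)) =
          (\<Sum>x\<in>VV. \<Sum>y\<in>VV. a * (f x * f y * (if card (x \<inter> y) = 0 then 1 else 0))
            + b * (f x * f y * (if card (x \<inter> y) = 4 then 1 else 0)) + c * (f x * f y))"
      by (intro sum.cong refl) (simp add: distrib_left mult_ac)
    also have "\<dots> = a * (\<Sum>x\<in>VV. \<Sum>y\<in>VV. f x * f y * (if card (x \<inter> y) = 0 then 1 else 0))
      + b * (\<Sum>x\<in>VV. \<Sum>y\<in>VV. f x * f y * (if card (x \<inter> y) = 4 then 1 else 0))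
      + c * (\<Sum>x\<in>VV. \<Sum>y\<in>VV. f x * f y)"
      by (simp only: sum.distrib sum_distrib_left)
    finally show ?thesis .
  qed
  then show ?thesis using 1 2 3 by simp
qed




lemma sos3:
  fixes c1 c2 c3 :: real and p1 p2 p3 :: "nat \<Rightarrow> real"
  assumes "c1 \<ge> 0" "c2 \<ge> 0" "c3 \<ge> 0"
  shows "0 \<le> (\<Sum>x\<in>VV. \<Sum>y\<in>VV. f x * f y * (c1 * KF (\<lambda>r s. p1 r * p1 s) (card (x \<inter> y))
        + c2 * KF (\<lambda>r s. p2 r * p2 s) (card (x \<inter> y)) + c3 * KF (\<lambda>r s. p3 r * p3 s) (card (x \<inter> y))))"
proof -
  have "0 \<le> c1 * (\<Sum>z\<in>VV. (\<Sum>x\<in>VV. f x * p1 (card (x \<inter> z)))^2)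
          + c2 * (\<Sum>z\<in>VV. (\<Sum>x\<in>VV. f x * p2 (card (x \<inter> z)))^2)
          + c3 * (\<Sum>z\<in>VV. (\<Sum>x\<in>VV. f x * p3 (card (x \<inter> z)))^2)"
    using assms by (intro add_nonneg_nonneg mult_nonneg_nonneg sum_nonneg) auto
  also have "\<dots> = c1 * (\<Sum>x\<in>VV. \<Sum>y\<in>VV. f x * f y * KF (\<lambda>r s. p1 r * p1 s) (card (x \<inter> y)))
          + c2 * (\<Sum>x\<in>VV. \<Sum>y\<in>VV. f x * f y * KF (\<lambda>r s. p2 r * p2 s) (card (x \<inter> y)))
          + c3 * (\<Sum>x\<in>VV. \<Sum>y\<in>VV. f x * f y * KF (\<lambda>r s. p3 r * p3 s) (card (x \<inter> y)))"
    by (simp only: sos_form)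
  also have "\<dots> = (\<Sum>x\<in>VV. \<Sum>y\<in>VV. c1 * (f x * f y * KF (\<lambda>r s. p1 r * p1 s) (card (x \<inter> y)))
        + c2 * (f x * f y * KF (\<lambda>r s. p2 r * p2 s) (card (x \<inter> y))) + c3 * (f x * f y * KF (\<lambda>r s. p3 r * p3 s) (card (x \<inter> y))))"
    by (simp only: sum.distrib sum_distrib_left)
  also have "\<dots> = (\<Sum>x\<in>VV. \<Sum>y\<in>VV. f x * f y * (c1 * KF (\<lambda>r s. p1 r * p1 s) (card (x \<inter> y))
        + c2 * KF (\<lambda>r s. p2 r * p2 s) (card (x \<inter> y)) + c3 * KF (\<lambda>r s. p3 r * p3 s) (card (x \<inter> y))))"
    by (intro sum.cong refl) (simp add: distrib_left mult_ac)
  finally show ?thesis .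
qed

lemma L1: "(\<Sum>x\<in>VV. f x)^2 / 6 \<le> Qf f + 20 * (\<Sum>x\<in>VV. (f x)^2)"
proof -
  have key: "(\<Sum>x\<in>VV. \<Sum>y\<in>VV. f x * f y * ((30/105^2) * KF (\<lambda>r s. phi2 r * phi2 s) (card (x \<inter> y))
        + (16/420^2) * KF (\<lambda>r s. phi3 r * phi3 s) (card (x \<inter> y)) + (21/210^2) * KF (\<lambda>r s. phi4 r * phi4 s) (card (x \<inter> y))))
     = (\<Sum>x\<in>VV. \<Sum>y\<in>VV. f x * f y * (1 * (if card (x \<inter> y) = 0 then 1 else 0)
            + 20 * (if card (x \<inter> y) = 4 then 1 else 0) + (-1/6)))"
  proof (intro sum.cong refl)
    fix x y assume x: "x \<in> VV"
    have i: "card (x \<inter> y) \<le> 4" using VV_card_le[OF x] .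
    show "f x * f y * ((30/105^2) * KF (\<lambda>r s. phi2 r * phi2 s) (card (x \<inter> y))
        + (16/420^2) * KF (\<lambda>r s. phi3 r * phi3 s) (card (x \<inter> y)) + (21/210^2) * KF (\<lambda>r s. phi4 r * phi4 s) (card (x \<inter> y)))
      = f x * f y * (1 * (if card (x \<inter> y) = 0 then 1 else 0)
            + 20 * (if card (x \<inter> y) = 4 then 1 else 0) + (-1/6))"
      unfolding KF_phi2[OF i] KF_phi3[OF i] KF_phi4[OF i]
      using le4_cases[OF i] by (auto simp: phi2_def phi3_def phi4_def)
  qed
  have "0 \<le> (\<Sum>x\<in>VV. \<Sum>y\<in>VV. f x * f y * ((30/105^2) * KF (\<lambda>r s. phi2 r * phi2 s) (card (x \<inter> y))
        + (16/420^2) * KF (\<lambda>r s. phi3 r * phi3 s) (card (x \<inter> y)) + (21/210^2) * KF (\<lambda>r s. phi4 r * phi4 s) (card (x \<inter> y))))"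
    by (rule sos3) auto
  then have "0 \<le> 1 * Qf f + 20 * (\<Sum>x\<in>VV. (f x)^2) + (-1/6) * (\<Sum>x\<in>VV. f x)^2"
    unfolding key kernel_split .
  then show ?thesis by simp
qed

lemma L2: "Qf f \<le> 10 * (\<Sum>x\<in>VV. (f x)^2) + (5/66) * (\<Sum>x\<in>VV. f x)^2"
proof -
  have key: "(\<Sum>x\<in>VV. \<Sum>y\<in>VV. f x * f y * ((30/924^2) * KF (\<lambda>r s. phi1 r * phi1 s) (card (x \<inter> y))
        + (14/420^2) * KF (\<lambda>r s. phi3 r * phi3 s) (card (x \<inter> y)) + (9/210^2) * KF (\<lambda>r s. phi4 r * phi4 s) (card (x \<inter> y))))
     = (\<Sum>x\<in>VV. \<Sum>y\<in>VV. f x * f y * ((-1) * (if card (x \<inter> y) = 0 then 1 else 0)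
            + 10 * (if card (x \<inter> y) = 4 then 1 else 0) + (5/66)))"
  proof (intro sum.cong refl)
    fix x y assume x: "x \<in> VV"
    have i: "card (x \<inter> y) \<le> 4" using VV_card_le[OF x] .
    show "f x * f y * ((30/924^2) * KF (\<lambda>r s. phi1 r * phi1 s) (card (x \<inter> y))
        + (14/420^2) * KF (\<lambda>r s. phi3 r * phi3 s) (card (x \<inter> y)) + (9/210^2) * KF (\<lambda>r s. phi4 r * phi4 s) (card (x \<inter> y)))
      = f x * f y * ((-1) * (if card (x \<inter> y) = 0 then 1 else 0)
            + 10 * (if card (x \<inter> y) = 4 then 1 else 0) + (5/66))"
      unfolding KF_phi1[OF i] KF_phi3[OF i] KF_phi4[OF i]
      using le4_cases[OF i] by (auto simp: phi1_def phi3_def phi4_def)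
  qed
  have "0 \<le> (\<Sum>x\<in>VV. \<Sum>y\<in>VV. f x * f y * ((30/924^2) * KF (\<lambda>r s. phi1 r * phi1 s) (card (x \<inter> y))
        + (14/420^2) * KF (\<lambda>r s. phi3 r * phi3 s) (card (x \<inter> y)) + (9/210^2) * KF (\<lambda>r s. phi4 r * phi4 s) (card (x \<inter> y))))"
    by (rule sos3) auto
  then have "0 \<le> (-1) * Qf f + 10 * (\<Sum>x\<in>VV. (f x)^2) + (5/66) * (\<Sum>x\<in>VV. f x)^2"
    unfolding key kernel_split .
  then show ?thesis by simp
qed




lemma VV_mem: "x \<in> VV \<longleftrightarrow> x \<subseteq> {1..11} \<and> card x = 4"
  unfolding kneser_vertices_def by simp

lemma VV_finite_mem: "x \<in> VV \<Longrightarrow> finite x"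
  using VV_mem finite_subset[of x "{1..11::nat}"] by auto

lemma VV_nonempty_mem: "x \<in> VV \<Longrightarrow> x \<inter> x \<noteq> {}"
  using VV_mem by (metis Int_absorb card.empty zero_neq_numeral)

lemma card_VV: "card VV = 330"
proof -
  have "card VV = card {1..11::nat} choose 4" unfolding kneser_vertices_def
    by (rule n_subsets) simp
  also have "\<dots> = 330" by (simp add: numeral_eq_Suc)
  finally show ?thesis .
qed

definition nbr :: "nat set \<Rightarrow> nat set set" where
  "nbr x = {y \<in> VV. x \<inter> y = {}}"

lemma card_nbr: "x \<in> VV \<Longrightarrow> card (nbr x) = 35"
proof -
  assume x: "x \<in> VV"
  have "nbr x = {y. y \<subseteq> {1..11} - x \<and> card y = 4}"
    unfolding nbr_def kneser_vertices_def by auto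
  moreover have "card ({1..11::nat} - x) = 7"
    using x VV_mem card_Diff_subset[OF VV_finite_mem[OF x]] by simp
  ultimately have "card (nbr x) = 7 choose 4" using n_subsets[of "{1..11::nat} - x" 4] by simp
  also have "\<dots> = 35" by (simp add: numeral_eq_Suc)
  finally show ?thesis .
qed

lemma deg35: "x \<in> VV \<Longrightarrow> (\<Sum>y\<in>VV. (if x \<inter> y = {} then 1 else 0::real)) = 35"
proof -
  assume x: "x \<in> VV"
  have "(\<Sum>y\<in>VV. (if x \<inter> y = {} then 1 else 0::real)) = real (card (nbr x))"
  proof -
    have e: "{y\<in>VV. x \<inter> y = {}} = VV \<inter> {y. x \<inter> y = {}}" by auto
    show ?thesis unfolding nbr_def e using VV_fin by (simp add: sum.If_cases)
  qed
  then show ?thesis using card_nbr[OF x] by simp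
qed

lemma conn_equiv:
  assumes "W \<subseteq> VV"
  shows "equiv W (conn_rel kneser_adj W)"
proof -
  let ?P = "\<lambda>a b. a \<in> W \<and> b \<in> W \<and> kneser_adj a b"
  have sP: "symp ?P" unfolding symp_def kneser_adj_def by (auto simp: Int_commute)
  have sPs: "symp ?P\<^sup>*\<^sup>*" by (rule symp_rtranclp[OF sP])
  show ?thesis unfolding conn_rel_def
  proof (rule equivI)
    show "{(x, y). x \<in> W \<and> y \<in> W \<and> ?P\<^sup>*\<^sup>* x y} \<subseteq> W \<times> W" by auto
    show "refl_on W {(x, y). x \<in> W \<and> y \<in> W \<and> ?P\<^sup>*\<^sup>* x y}"
      unfolding refl_on_def by auto
    show "sym {(x, y). x \<in> W \<and> y \<in> W \<and> ?P\<^sup>*\<^sup>* x y}"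
      unfolding sym_def using sPs by (auto dest: sympD)
    show "trans {(x, y). x \<in> W \<and> y \<in> W \<and> ?P\<^sup>*\<^sup>* x y}"
      unfolding trans_def by (auto intro: rtranclp_trans)
  qed
qed

lemma conn_adj:
  "x \<in> W \<Longrightarrow> y \<in> W \<Longrightarrow> x \<inter> y = {} \<Longrightarrow> (x, y) \<in> conn_rel kneser_adj W"
  unfolding conn_rel_def kneser_adj_def by auto

lemma class_closed:
  assumes W: "W \<subseteq> VV" and C: "C \<in> W // conn_rel kneser_adj W" and x: "x \<in> C"
    and y: "y \<in> W" and xy: "x \<inter> y = {}"
  shows "y \<in> C"
proof -
  let ?R = "conn_rel kneser_adj W"
  have eq: "equiv W ?R" by (rule conn_equiv[OF W])
  obtain x0 where C0: "C = ?R``{x0}" and x0: "x0 \<in> W" using C by (rule quotientE)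
  have "(x0, x) \<in> ?R" using x C0 by simp
  moreover have "x \<in> W" using x C0 eq unfolding equiv_def refl_on_def by auto
  then have "(x, y) \<in> ?R" using conn_adj[OF _ y xy] by simp
  ultimately have "(x0, y) \<in> ?R" using eq unfolding equiv_def trans_def by blast
  then show ?thesis using C0 by simp
qed

lemma class_sub: "W \<subseteq> VV \<Longrightarrow> C \<in> W // conn_rel kneser_adj W \<Longrightarrow> C \<subseteq> W"
  using conn_equiv in_quotient_imp_subset by blast

lemma class_ne: "W \<subseteq> VV \<Longrightarrow> C \<in> W // conn_rel kneser_adj W \<Longrightarrow> C \<noteq> {}"
  using conn_equiv in_quotient_imp_non_empty by blast




definition ad :: "nat set \<Rightarrow> nat set \<Rightarrow> real" where
  "ad x y = (if x \<inter> y = {} then 1 else 0)"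

lemma ad_sym: "ad x y = ad y x" unfolding ad_def by (simp add: Int_commute)
lemma ad_nonneg: "0 \<le> ad x y" unfolding ad_def by simp
lemma ad_le1: "ad x y \<le> 1" unfolding ad_def by simp
lemma ad_self: "x \<in> VV \<Longrightarrow> ad x x = 0" unfolding ad_def using VV_nonempty_mem by simp

definition dS :: "nat set set \<Rightarrow> nat set \<Rightarrow> real" where
  "dS S x = (\<Sum>y\<in>S. ad x y)"

definition beta :: "nat set set \<Rightarrow> nat set set \<Rightarrow> real" where
  "beta S C = (\<Sum>x\<in>C. dS S x)"

definition Xv :: "nat set set \<Rightarrow> nat set set \<Rightarrow> real" where
  "Xv S C = real (card C) * beta S C / (55 * real (card C) - beta S C)"

definition aC :: "nat set set \<Rightarrow> nat set set \<Rightarrow> real" where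
  "aC S C = - beta S C / (55 * real (card C) - beta S C)"

lemma deg_split:
  assumes S: "S \<subseteq> VV" and x: "x \<in> VV"
  shows "(\<Sum>y\<in>VV - S. ad x y) = 35 - dS S x"
proof -
  have "(\<Sum>y\<in>VV. ad x y) = 35" using deg35[OF x] unfolding ad_def .
  moreover have "(\<Sum>y\<in>VV. ad x y) = dS S x + (\<Sum>y\<in>VV - S. ad x y)"
    unfolding dS_def using sum.subset_diff[OF S VV_fin, of "ad x"] by simp
  ultimately show ?thesis by simp
qed

lemma class_sum:
  assumes S: "S \<subseteq> VV" and C: "C \<in> (VV - S) // conn_rel kneser_adj (VV - S)" and x: "x \<in> C"
  shows "(\<Sum>y\<in>VV - S. ad x y * g y) = (\<Sum>y\<in>C. ad x y * g y)"
proof -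
  have W: "VV - S \<subseteq> VV" by auto
  have CW: "C \<subseteq> VV - S" by (rule class_sub[OF W C])
  have z: "ad x y * g y = 0" if "y \<in> (VV - S) - C" for y
  proof -
    have "x \<inter> y \<noteq> {}" using class_closed[OF W C x] that by auto
    then show ?thesis unfolding ad_def by simp
  qed
  have "(\<Sum>y\<in>VV - S. ad x y * g y) = (\<Sum>y\<in>C. ad x y * g y) + (\<Sum>y\<in>(VV - S) - C. ad x y * g y)"
    using sum.subset_diff[OF CW, of "\<lambda>y. ad x y * g y"] VV_fin by simp
  also have "(\<Sum>y\<in>(VV - S) - C. ad x y * g y) = 0" by (rule sum.neutral) (use z in blast)
  finally show ?thesis by simp
qed

lemma dS_class:
  assumes S: "S \<subseteq> VV" and C: "C \<in> (VV - S) // conn_rel kneser_adj (VV - S)" and x: "x \<in> C"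
  shows "dS S x = 35 - (\<Sum>y\<in>C. ad x y)"
proof -
  have W: "VV - S \<subseteq> VV" by auto
  have xV: "x \<in> VV" using class_sub[OF W C] x by auto
  show ?thesis using deg_split[OF S xV] class_sum[OF S C x, of "\<lambda>_. 1"] by simp
qed




definition ECC :: "nat set set \<Rightarrow> real" where
  "ECC C = (\<Sum>x\<in>C. \<Sum>y\<in>C. ad x y)"

lemma sum_ind_VV:
  assumes "C \<subseteq> VV"
  shows "(\<Sum>x\<in>VV. (if x \<in> C then g x else 0)) = (\<Sum>x\<in>C. g x)"
proof -
  have "(\<Sum>x\<in>VV. (if x \<in> C then g x else 0)) = (\<Sum>x\<in>{x\<in>VV. x \<in> C}. g x)"
    by (rule sum.inter_filter[symmetric]) (rule VV_fin)
  also have "{x\<in>VV. x \<in> C} = C" using assms by auto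
  finally show ?thesis .
qed

lemma Qf_ind:
  assumes "C \<subseteq> VV"
  shows "Qf (\<lambda>x. if x \<in> C then 1 else 0) = ECC C"
proof -
  have "Qf (\<lambda>x. if x \<in> C then 1 else 0) = (\<Sum>x\<in>VV. if x \<in> C then (\<Sum>y\<in>VV. if y \<in> C then ad x y else 0) else 0)"
    unfolding Qf_def
  proof (rule sum.cong[OF refl])
    fix x assume "x \<in> VV"
    show "(\<Sum>y\<in>VV. if x \<inter> y = {} then (if x \<in> C then 1 else 0) * (if y \<in> C then 1 else 0) else 0) =
          (if x \<in> C then (\<Sum>y\<in>VV. if y \<in> C then ad x y else 0) else 0)"
    proof (cases "x \<in> C")
      case True
      have "\<And>y. (if x \<inter> y = {} then (if x \<in> C then 1 else 0) * (if y \<in> C then 1 else 0) else 0) = (if y \<in> C then ad x y else (0::real))"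
        using True by (simp add: ad_def)
      then show ?thesis using True by simp
    next
      case False
      have "\<And>y. (if x \<inter> y = {} then (if x \<in> C then 1 else 0) * (if y \<in> C then 1 else 0) else 0) = (0::real)"
        using False by simp
      then show ?thesis using False by simp
    qed
  qed
  also have "\<dots> = (\<Sum>x\<in>C. \<Sum>y\<in>VV. if y \<in> C then ad x y else 0)" by (rule sum_ind_VV[OF assms])
  also have "\<dots> = ECC C" unfolding ECC_def by (rule sum.cong[OF refl]) (rule sum_ind_VV[OF assms])
  finally show ?thesis .
qed

lemma ECC_L2:
  assumes "C \<subseteq> VV"
  shows "ECC C \<le> 10 * real (card C) + (5/66) * (real (card C))^2"
proof -
  have fC: "finite C" using assms VV_fin finite_subset by blast
  have 1: "(\<Sum>x\<in>VV. ((\<lambda>x. if x \<in> C then 1 else 0::real) x)^2) = real (card C)"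
  proof -
    have e: "\<And>x. (if x \<in> C then 1 else 0::real)^2 = (if x \<in> C then 1 else 0)" by simp
    show ?thesis unfolding e using sum_ind_VV[OF assms, of "\<lambda>_. 1::real"] by simp
  qed
  have 2: "(\<Sum>x\<in>VV. (\<lambda>x. if x \<in> C then 1 else 0::real) x) = real (card C)"
    using sum_ind_VV[OF assms, of "\<lambda>_. 1::real"] by simp
  show ?thesis using L2[of "\<lambda>x. if x \<in> C then 1 else 0"] Qf_ind[OF assms] 1 2 by simp
qed

lemma ECC_triv:
  assumes "C \<subseteq> VV"
  shows "ECC C \<le> real (card C) * (real (card C) - 1)" and "0 \<le> ECC C"
proof -
  have fC: "finite C" using assms VV_fin finite_subset by blast
  have "(\<Sum>y\<in>C. ad x y) \<le> real (card C) - 1" if x: "x \<in> C" for x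
  proof -
    have "(\<Sum>y\<in>C. ad x y) = ad x x + (\<Sum>y\<in>C - {x}. ad x y)" using sum.remove[OF fC x] by simp
    also have "ad x x = 0" using ad_self x assms by auto
    also have "(\<Sum>y\<in>C - {x}. ad x y) \<le> real (card (C - {x})) * 1"
      by (rule sum_bounded_above) (rule ad_le1)
    also have "real (card (C - {x})) = real (card C) - 1"
    proof -
      have "card C \<noteq> 0" using x fC by auto
      then have "card C \<ge> 1" by simp
      then show ?thesis using x fC by (simp add: card_Diff_singleton of_nat_diff)
    qed
    finally show ?thesis by simp
  qed
  then have "ECC C \<le> (\<Sum>x\<in>C. real (card C) - 1)" unfolding ECC_def by (rule sum_mono)
  then show "ECC C \<le> real (card C) * (real (card C) - 1)" by simp
  show "0 \<le> ECC C" unfolding ECC_def by (intro sum_nonneg ad_nonneg)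
qed

lemma beta_ECC:
  assumes S: "S \<subseteq> VV" and C: "C \<in> (VV - S) // conn_rel kneser_adj (VV - S)"
  shows "beta S C = 35 * real (card C) - ECC C"
proof -
  have "beta S C = (\<Sum>x\<in>C. 35 - (\<Sum>y\<in>C. ad x y))"
    unfolding beta_def by (intro sum.cong refl) (rule dS_class[OF S C])
  also have "\<dots> = 35 * real (card C) - ECC C" unfolding ECC_def by (simp add: sum_subtractf)
  finally show ?thesis .
qed

lemma class_card_le:
  assumes S: "S \<subseteq> VV" and C: "C \<in> (VV - S) // conn_rel kneser_adj (VV - S)"
    and c2: "card ((VV - S) // conn_rel kneser_adj (VV - S)) \<ge> 2"
  shows "card C \<le> 294"
proof -
  let ?Cl = "(VV - S) // conn_rel kneser_adj (VV - S)"
  have W: "VV - S \<subseteq> VV" by auto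
  have eqv: "equiv (VV - S) (conn_rel kneser_adj (VV - S))" by (rule conn_equiv[OF W])
  obtain C' where C': "C' \<in> ?Cl" "C' \<noteq> C"
  proof -
    have "\<not> ?Cl \<subseteq> {C}"
    proof
      assume "?Cl \<subseteq> {C}"
      then have "card ?Cl \<le> card {C}" by (intro card_mono) auto
      then show False using c2 by simp
    qed
    then show ?thesis using that by blast
  qed
  obtain z where z: "z \<in> C'" using class_ne[OF W C'(1)] by auto
  have zW: "z \<in> VV - S" using class_sub[OF W C'(1)] z by auto
  have disj: "C \<inter> C' = {}" using quotient_disj[OF eqv C C'(1)] C'(2) by auto
  have "C \<subseteq> VV - insert z (nbr z)"
  proof
    fix y assume y: "y \<in> C"
    have yV: "y \<in> VV" using class_sub[OF W C] y by auto
    have "z \<noteq> y" using disj z y by auto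
    moreover have "y \<notin> nbr z"
    proof
      assume "y \<in> nbr z"
      then have "y \<inter> z = {}" unfolding nbr_def by auto
      then have "z \<in> C" using class_closed[OF W C y zW] by simp
      then show False using disj z by auto
    qed
    ultimately show "y \<in> VV - insert z (nbr z)" using yV by auto
  qed
  then have "card C \<le> card (VV - insert z (nbr z))" by (intro card_mono) (auto intro: VV_fin)
  also have "\<dots> = 330 - 36"
  proof -
    have zV: "z \<in> VV" using zW by auto
    have "z \<notin> nbr z" unfolding nbr_def using VV_nonempty_mem[OF zV] by auto
    moreover have "finite (nbr z)" unfolding nbr_def using VV_fin by auto
    ultimately have "card (insert z (nbr z)) = 36" using card_nbr[OF zV] by simp
    moreover have "insert z (nbr z) \<subseteq> VV" using zV unfolding nbr_def by auto
    ultimately show ?thesis using card_Diff_subset[of "insert z (nbr z)" VV] card_VV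
      by (simp add: finite_subset[OF _ VV_fin])
  qed
  finally show ?thesis by simp
qed




lemma poly_pos:
  fixes n :: real
  assumes "3 \<le> n" "n \<le> 294"
  shows "140*n*(n-1) - (10*n + 5/66*n^2)*(4*n+7) > 0"
proof -
  have id: "140*n*(n-1) - (10*n + 5/66*n^2)*(4*n+7) = (5*n/66)*(4*((n-3)*(294-n)) + 125*n + 756)"
    by (simp add: field_simps power2_eq_square)
  have "(n-3)*(294-n) \<ge> 0" using assms by (intro mult_nonneg_nonneg) auto
  then have "4*((n-3)*(294-n)) + 125*n + 756 > 0" using assms by linarith
  moreover have "5*n/66 > 0" using assms by simp
  ultimately show ?thesis unfolding id by (intro mult_pos_pos)
qed

lemma class_X:
  assumes S: "S \<subseteq> VV" and C: "C \<in> (VV - S) // conn_rel kneser_adj (VV - S)"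
    and c2: "card ((VV - S) // conn_rel kneser_adj (VV - S)) \<ge> 2"
  shows "0 < 55 * real (card C) - beta S C" and "7/4 \<le> Xv S C"
    and "card C \<ge> 2 \<Longrightarrow> 7/4 < Xv S C"
proof -
  have W: "VV - S \<subseteq> VV" by auto
  have CV: "C \<subseteq> VV" using class_sub[OF W C] by auto
  have fC: "finite C" using CV VV_fin finite_subset by blast
  have cne: "card C \<noteq> 0" using class_ne[OF W C] fC by auto
  define n where "n = real (card C)"
  define E where "E = ECC C"
  have n1: "n \<ge> 1" using cne unfolding n_def by simp
  have b: "beta S C = 35 * n - E" unfolding n_def E_def by (rule beta_ECC[OF S C])
  have E0: "0 \<le> E" and Et: "E \<le> n * (n - 1)" unfolding E_def n_def using ECC_triv[OF CV] by auto
  have E2: "E \<le> 10 * n + 5/66 * n^2" unfolding E_def n_def by (rule ECC_L2[OF CV])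
  have n294: "n \<le> 294" unfolding n_def using class_card_le[OF S C c2] by simp
  have D: "55 * n - beta S C = 20 * n + E" using b by simp
  show Dpos: "0 < 55 * real (card C) - beta S C" using D n1 E0 unfolding n_def by simp
  have X: "Xv S C = n * (35 * n - E) / (20 * n + E)" unfolding Xv_def n_def[symmetric] D unfolding b ..
  have key: "7/4 \<le> Xv S C \<longleftrightarrow> 0 \<le> 140*n*(n-1) - E*(4*n+7)"
    and key2: "7/4 < Xv S C \<longleftrightarrow> 0 < 140*n*(n-1) - E*(4*n+7)"
  proof -
    have pos: "0 < 20 * n + E" using n1 E0 by simp
    have "7/4 \<le> Xv S C \<longleftrightarrow> 7/4 * (20 * n + E) \<le> n * (35 * n - E)"
      unfolding X by (rule pos_le_divide_eq[OF pos])
    also have "\<dots> \<longleftrightarrow> 0 \<le> 140*n*(n-1) - E*(4*n+7)" by (rule iffI; simp add: algebra_simps; linarith)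
    finally show "7/4 \<le> Xv S C \<longleftrightarrow> 0 \<le> 140*n*(n-1) - E*(4*n+7)" .
    have "7/4 < Xv S C \<longleftrightarrow> 7/4 * (20 * n + E) < n * (35 * n - E)"
      unfolding X by (rule pos_less_divide_eq[OF pos])
    also have "\<dots> \<longleftrightarrow> 0 < 140*n*(n-1) - E*(4*n+7)" by (rule iffI; simp add: algebra_simps; linarith)
    finally show "7/4 < Xv S C \<longleftrightarrow> 0 < 140*n*(n-1) - E*(4*n+7)" .
  qed
  have strict: "0 < 140*n*(n-1) - E*(4*n+7)" if n2: "n \<ge> 2"
  proof (cases "n \<ge> 3")
    case True
    have "E*(4*n+7) \<le> (10*n + 5/66*n^2)*(4*n+7)" using E2 n1 by (intro mult_right_mono) auto
    then show ?thesis using poly_pos[OF True n294] by linarith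
  next
    case False
    then have "n = 2" using n2 unfolding n_def by simp
    then show ?thesis using Et E0 by simp
  qed
  have "0 \<le> 140*n*(n-1) - E*(4*n+7)"
  proof (cases "n \<ge> 2")
    case True then show ?thesis using strict by simp
  next
    case False
    then have "n = 1" using n1 unfolding n_def by simp
    then show ?thesis using Et E0 by simp
  qed
  then show "7/4 \<le> Xv S C" using key by simp
  show "card C \<ge> 2 \<Longrightarrow> 7/4 < Xv S C" using strict key2 unfolding n_def by simp
qed




lemma class_alg:
  fixes n b :: real
  assumes D: "0 < 55 * n - b"
  shows "n * (- b / (55 * n - b)) = - (n * b / (55 * n - b))"
    and "(- b / (55 * n - b))^2 * (55 * n - b) + 2 * (- b / (55 * n - b)) * b - b = - 55 * (n * b / (55 * n - b))"
proof -
  show "n * (- b / (55 * n - b)) = - (n * b / (55 * n - b))" by simp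
  define D where "D = 55 * n - b"
  have Dn: "D \<noteq> 0" using D unfolding D_def by simp
  have 1: "(- b / D)^2 * D + 2 * (- b / D) * b - b = - (b * b + b * D) / D"
    using Dn by (simp add: field_simps power2_eq_square)
  have 2: "b * b + b * D = 55 * n * b" unfolding D_def by (simp add: algebra_simps)
  show "(- b / (55 * n - b))^2 * (55 * n - b) + 2 * (- b / (55 * n - b)) * b - b = - 55 * (n * b / (55 * n - b))"
    unfolding D_def[symmetric] 1 2 by simp
qed

lemma main_ineq:
  assumes S: "S \<subseteq> VV"
    and c2: "card ((VV - S) // conn_rel kneser_adj (VV - S)) \<ge> 2"
  shows "(\<Sum>C\<in>(VV - S) // conn_rel kneser_adj (VV - S). Xv S C) \<le> real (card S)"
proof -
  define W where "W = VV - S"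
  define R where "R = conn_rel kneser_adj W"
  define Cl where "Cl = W // R"
  have WV: "W \<subseteq> VV" unfolding W_def by auto
  have eqv: "equiv W R" unfolding R_def by (rule conn_equiv[OF WV])
  have finW: "finite W" using WV VV_fin finite_subset by blast
  have finS: "finite S" using S VV_fin finite_subset by blast
  have finCl: "finite Cl" unfolding Cl_def by (rule finite_quotient[OF finW equiv_type[OF eqv]])
  have ClC: "C \<in> (VV - S) // conn_rel kneser_adj (VV - S)" if "C \<in> Cl" for C
    using that unfolding Cl_def R_def W_def .
  have c2': "card ((VV - S) // conn_rel kneser_adj (VV - S)) \<ge> 2" by (rule c2)
  have Csub: "C \<subseteq> W" if "C \<in> Cl" for C using class_sub[OF WV] that unfolding Cl_def R_def by blast
  have finC: "finite C" if "C \<in> Cl" for C using Csub[OF that] finW finite_subset by blast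
  have sumW: "(\<Sum>x\<in>W. g x) = (\<Sum>C\<in>Cl. \<Sum>x\<in>C. g x)" for g :: "nat set \<Rightarrow> real"
  proof -
    have "(\<Sum>x\<in>\<Union>Cl. g x) = (\<Sum>C\<in>Cl. \<Sum>x\<in>C. g x)"
      using sum.Union_disjoint[of Cl g] finC quotient_disj[OF eqv] unfolding Cl_def by auto
    moreover have "\<Union>Cl = W" unfolding Cl_def by (rule Union_quotient[OF eqv])
    ultimately show ?thesis by simp
  qed
  have cls: "R``{x} = C" if C: "C \<in> Cl" and x: "x \<in> C" for C x
  proof -
    obtain x0 where C0: "C = R``{x0}" and "x0 \<in> W" using C unfolding Cl_def by (rule quotientE)
    then have "(x0, x) \<in> R" using x by simp
    then have "R``{x0} = R``{x}" by (rule equiv_class_eq[OF eqv])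
    then show ?thesis using C0 by simp
  qed
  define a where "a C = aC S C" for C
  define b where "b C = beta S C" for C
  define n where "n (C::nat set set) = real (card C)" for C
  define f where "f x = (if x \<in> S then 1 else a (R``{x}))" for x
  have fS: "f x = 1" if "x \<in> S" for x using that unfolding f_def by simp
  have fC: "f x = a C" if "C \<in> Cl" "x \<in> C" for C x
  proof -
    have "x \<notin> S" using Csub[OF that(1)] that(2) unfolding W_def by auto
    then show ?thesis unfolding f_def using cls[OF that] by simp
  qed
  have splitV: "(\<Sum>x\<in>VV. g x) = (\<Sum>x\<in>S. g x) + (\<Sum>x\<in>W. g x)" for g :: "nat set \<Rightarrow> real"
    unfolding W_def using sum.subset_diff[OF S VV_fin, of g] by simp
  have sum1: "(\<Sum>x\<in>VV. f x) = real (card S) + (\<Sum>C\<in>Cl. n C * a C)"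
  proof -
    have "(\<Sum>x\<in>S. f x) = real (card S)" using fS by simp
    moreover have "(\<Sum>x\<in>W. f x) = (\<Sum>C\<in>Cl. n C * a C)"
      unfolding sumW n_def using fC by (intro sum.cong refl) simp
    ultimately show ?thesis using splitV by simp
  qed
  have sum2: "(\<Sum>x\<in>VV. (f x)^2) = real (card S) + (\<Sum>C\<in>Cl. n C * (a C)^2)"
  proof -
    have "(\<Sum>x\<in>S. (f x)^2) = real (card S)" using fS by simp
    moreover have "(\<Sum>x\<in>W. (f x)^2) = (\<Sum>C\<in>Cl. n C * (a C)^2)"
      unfolding sumW n_def using fC by (intro sum.cong refl) simp
    ultimately show ?thesis using splitV by simp
  qed
  define h where "h x = (\<Sum>y\<in>VV. ad x y * f y)" for x
  have Qh: "Qf f = (\<Sum>x\<in>VV. f x * h x)"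
    unfolding Qf_def h_def sum_distrib_left by (intro sum.cong refl) (simp add: ad_def)
  have hC: "h x = dS S x + a C * (35 - dS S x)" if C: "C \<in> Cl" and x: "x \<in> C" for C x
  proof -
    have C': "C \<in> (VV - S) // conn_rel kneser_adj (VV - S)" by (rule ClC[OF C])
    have "h x = (\<Sum>y\<in>S. ad x y * f y) + (\<Sum>y\<in>W. ad x y * f y)" unfolding h_def by (rule splitV)
    also have "(\<Sum>y\<in>S. ad x y * f y) = dS S x" unfolding dS_def using fS by simp
    also have "(\<Sum>y\<in>W. ad x y * f y) = (\<Sum>y\<in>C. ad x y * f y)"
      unfolding W_def by (rule class_sum[OF S C' x])
    also have "\<dots> = a C * (\<Sum>y\<in>C. ad x y)" unfolding sum_distrib_left
      using fC[OF C] by (intro sum.cong refl) simp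
    also have "(\<Sum>y\<in>C. ad x y) = 35 - dS S x" using dS_class[OF S C' x] by simp
    finally show ?thesis .
  qed
  have sumC: "(\<Sum>x\<in>C. f x * h x) = a C * (b C + a C * (35 * n C - b C))" if C: "C \<in> Cl" for C
  proof -
    have "(\<Sum>x\<in>C. f x * h x) = (\<Sum>x\<in>C. a C * (dS S x + a C * (35 - dS S x)))"
      using fC[OF C] hC[OF C] by (intro sum.cong refl) simp
    also have "\<dots> = a C * ((\<Sum>x\<in>C. dS S x) + a C * (35 * n C - (\<Sum>x\<in>C. dS S x)))"
      unfolding n_def by (simp add: sum_distrib_left sum.distrib sum_subtractf algebra_simps)
    finally show ?thesis unfolding b_def beta_def .
  qed
  have sumS: "(\<Sum>x\<in>S. h x) = 35 * real (card S) - (\<Sum>C\<in>Cl. b C) + (\<Sum>C\<in>Cl. a C * b C)"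
  proof -
    have "(\<Sum>x\<in>S. h x) = (\<Sum>y\<in>VV. \<Sum>x\<in>S. ad x y * f y)" unfolding h_def by (rule sum.swap)
    also have "\<dots> = (\<Sum>y\<in>VV. f y * dS S y)" unfolding dS_def sum_distrib_left
      by (intro sum.cong refl) (simp add: ad_sym mult.commute)
    also have "\<dots> = (\<Sum>y\<in>S. f y * dS S y) + (\<Sum>y\<in>W. f y * dS S y)" by (rule splitV)
    also have "(\<Sum>y\<in>W. f y * dS S y) = (\<Sum>C\<in>Cl. a C * b C)"
      unfolding sumW b_def beta_def sum_distrib_left using fC by (intro sum.cong refl) simp
    also have "(\<Sum>y\<in>S. f y * dS S y) = (\<Sum>y\<in>S. dS S y)" using fS by simp
    also have "(\<Sum>y\<in>S. dS S y) = 35 * real (card S) - (\<Sum>C\<in>Cl. b C)"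
    proof -
      have "(\<Sum>y\<in>S. dS S y) = (\<Sum>y\<in>S. 35 - (\<Sum>z\<in>W. ad y z))"
        unfolding W_def using deg_split[OF S] S by (intro sum.cong refl) auto
      also have "\<dots> = 35 * real (card S) - (\<Sum>y\<in>S. \<Sum>z\<in>W. ad y z)" by (simp add: sum_subtractf)
      also have "(\<Sum>y\<in>S. \<Sum>z\<in>W. ad y z) = (\<Sum>z\<in>W. \<Sum>y\<in>S. ad z y)"
        by (subst sum.swap) (simp add: ad_sym)
      also have "\<dots> = (\<Sum>z\<in>W. dS S z)" unfolding dS_def ..
      also have "\<dots> = (\<Sum>C\<in>Cl. b C)" unfolding sumW b_def beta_def ..
      finally show ?thesis .
    qed
    finally show ?thesis by simp
  qed
  have Qval: "Qf f = 35 * real (card S) - (\<Sum>C\<in>Cl. b C) + 2 * (\<Sum>C\<in>Cl. a C * b C)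
      + (\<Sum>C\<in>Cl. (a C)^2 * (35 * n C - b C))"
  proof -
    have "Qf f = (\<Sum>x\<in>S. f x * h x) + (\<Sum>x\<in>W. f x * h x)" unfolding Qh by (rule splitV)
    also have "(\<Sum>x\<in>S. f x * h x) = (\<Sum>x\<in>S. h x)" using fS by simp
    also have "(\<Sum>x\<in>W. f x * h x) = (\<Sum>C\<in>Cl. a C * (b C + a C * (35 * n C - b C)))"
      unfolding sumW using sumC by simp
    also have "\<dots> = (\<Sum>C\<in>Cl. a C * b C) + (\<Sum>C\<in>Cl. (a C)^2 * (35 * n C - b C))"
      by (simp add: sum.distrib[symmetric] algebra_simps power2_eq_square)
    finally show ?thesis using sumS by simp
  qed
  have Dpos: "0 < 55 * n C - b C" if "C \<in> Cl" for C
    using class_X(1)[OF S ClC[OF that] c2] unfolding n_def b_def .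
  have aX: "n C * a C = - Xv S C" if "C \<in> Cl" for C
    unfolding a_def aC_def Xv_def using class_alg(1)[OF Dpos[OF that]] unfolding n_def b_def by simp
  have qX: "(a C)^2 * (55 * n C - b C) + 2 * a C * b C - b C = - 55 * Xv S C" if "C \<in> Cl" for C
    unfolding a_def aC_def Xv_def using class_alg(2)[OF Dpos[OF that]] unfolding n_def b_def by simp
  define X where "X = (\<Sum>C\<in>Cl. Xv S C)"
  define s where "s = real (card S)"
  have sumf: "(\<Sum>x\<in>VV. f x) = s - X"
    unfolding sum1 X_def s_def using aX by (simp add: sum_negf)
  have QF: "Qf f + 20 * (\<Sum>x\<in>VV. (f x)^2) = 55 * (s - X)"
  proof -
    have e: "(\<Sum>C\<in>Cl. (a C)^2 * (55 * n C - b C) + 2 * a C * b C - b C) =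
        (\<Sum>C\<in>Cl. ((a C)^2 * (35 * n C - b C) + 20 * (n C * (a C)^2)) + 2 * (a C * b C) - b C)"
      by (intro sum.cong refl) (simp add: algebra_simps)
    also have "\<dots> = (\<Sum>C\<in>Cl. (a C)^2 * (35 * n C - b C)) + 20 * (\<Sum>C\<in>Cl. n C * (a C)^2)
        + 2 * (\<Sum>C\<in>Cl. a C * b C) - (\<Sum>C\<in>Cl. b C)"
      by (simp only: sum.distrib sum_subtractf sum_distrib_left)
    finally have e': "(\<Sum>C\<in>Cl. (a C)^2 * (55 * n C - b C) + 2 * a C * b C - b C) =
        (\<Sum>C\<in>Cl. (a C)^2 * (35 * n C - b C)) + 20 * (\<Sum>C\<in>Cl. n C * (a C)^2)
        + 2 * (\<Sum>C\<in>Cl. a C * b C) - (\<Sum>C\<in>Cl. b C)" .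
    have "Qf f + 20 * (\<Sum>x\<in>VV. (f x)^2) = 55 * s + (\<Sum>C\<in>Cl. (a C)^2 * (55 * n C - b C) + 2 * a C * b C - b C)"
      unfolding Qval sum2 s_def e' by (simp add: algebra_simps)
    also have "(\<Sum>C\<in>Cl. (a C)^2 * (55 * n C - b C) + 2 * a C * b C - b C) = (\<Sum>C\<in>Cl. - 55 * Xv S C)"
      using qX by (intro sum.cong refl) simp
    also have "(\<Sum>C\<in>Cl. - 55 * Xv S C) = - 55 * X" unfolding X_def by (simp add: sum_distrib_left)
    finally show ?thesis by simp
  qed
  have "(s - X)^2 / 6 \<le> 55 * (s - X)" using L1[of f] unfolding sumf QF .
  then have "0 \<le> s - X"
  proof -
    assume h: "(s - X)^2 / 6 \<le> 55 * (s - X)"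
    show "0 \<le> s - X"
    proof (rule ccontr)
      assume "\<not> 0 \<le> s - X"
      then have "55 * (s - X) < 0" by simp
      moreover have "0 \<le> (s - X)^2 / 6" by simp
      ultimately show False using h by linarith
    qed
  qed
  then show ?thesis unfolding X_def s_def Cl_def W_def R_def by simp
qed




lemma cut_bound:
  assumes cut: "vertex_cut VV kneser_adj S"
  shows "7/4 * real (num_components VV kneser_adj S) \<le> real (card S)"
    and "real (card S) = 7/4 * real (num_components VV kneser_adj S) \<Longrightarrow>
         \<forall>C\<in>(VV - S) // conn_rel kneser_adj (VV - S). card C = 1"
proof -
  let ?Cl = "(VV - S) // conn_rel kneser_adj (VV - S)"
  have S: "S \<subseteq> VV" and c2: "card ?Cl \<ge> 2" using cut unfolding vertex_cut_def num_components_def by auto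
  have W: "VV - S \<subseteq> VV" by auto
  have finCl: "finite ?Cl"
    by (rule finite_quotient[OF _ equiv_type[OF conn_equiv[OF W]]]) (use VV_fin in auto)
  have nc: "num_components VV kneser_adj S = card ?Cl" unfolding num_components_def ..
  have ge: "(\<Sum>C\<in>?Cl. 7/4) \<le> (\<Sum>C\<in>?Cl. Xv S C)"
    by (rule sum_mono) (rule class_X(2)[OF S _ c2])
  then show "7/4 * real (num_components VV kneser_adj S) \<le> real (card S)"
    using main_ineq[OF S c2] unfolding nc by simp
  assume eq: "real (card S) = 7/4 * real (num_components VV kneser_adj S)"
  show "\<forall>C\<in>?Cl. card C = 1"
  proof (rule ccontr)
    assume "\<not> (\<forall>C\<in>?Cl. card C = 1)"
    then obtain C0 where C0: "C0 \<in> ?Cl" "card C0 \<noteq> 1" by auto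
    have "C0 \<noteq> {}" using class_ne[OF W C0(1)] .
    moreover have "finite C0" using class_sub[OF W C0(1)] VV_fin finite_subset by blast
    ultimately have "card C0 \<ge> 2" using C0(2) by (cases "card C0") (auto simp: card_eq_0_iff)
    then have "7/4 < Xv S C0" using class_X(3)[OF S C0(1) c2] by simp
    then have "(\<Sum>C\<in>?Cl. 7/4) < (\<Sum>C\<in>?Cl. Xv S C)"
      using finCl C0(1) class_X(2)[OF S _ c2] by (intro sum_strict_mono_ex1) auto
    then show False using main_ineq[OF S c2] eq unfolding nc by simp
  qed
qed

lemma indep_le_120:
  assumes "independent_set VV kneser_adj J"
  shows "card J \<le> 120"
proof -
  have JV: "J \<subseteq> VV" and ind: "\<forall>x\<in>J. \<forall>y\<in>J. \<not> kneser_adj x y"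
    using assms unfolding independent_set_def by auto
  have E0: "ECC J = 0" unfolding ECC_def using ind by (simp add: ad_def kneser_adj_def)
  have 1: "(\<Sum>x\<in>VV. ((\<lambda>x. if x \<in> J then 1 else 0::real) x)^2) = real (card J)"
  proof -
    have e: "\<And>x. (if x \<in> J then 1 else 0::real)^2 = (if x \<in> J then 1 else 0)" by simp
    show ?thesis unfolding e using sum_ind_VV[OF JV, of "\<lambda>_. 1::real"] by simp
  qed
  have 2: "(\<Sum>x\<in>VV. (\<lambda>x. if x \<in> J then 1 else 0::real) x) = real (card J)"
    using sum_ind_VV[OF JV, of "\<lambda>_. 1::real"] by simp
  have "(real (card J))^2 / 6 \<le> 20 * real (card J)"
    using L1[of "\<lambda>x. if x \<in> J then 1 else 0"] Qf_ind[OF JV] E0 1 2 by simp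
  then have "real (card J) * real (card J) \<le> 120 * real (card J)" by (simp add: power2_eq_square)
  then have "real (card J) \<le> 120"
    by (cases "card J = 0") (auto simp: mult_le_cancel_right)
  then show ?thesis by simp
qed

definition star1 :: "nat set set" where "star1 = {x \<in> VV. 1 \<in> x}"

lemma star1_indep: "independent_set VV kneser_adj star1"
  unfolding independent_set_def star1_def kneser_adj_def by auto

lemma card_nonstar: "card (VV - star1) = 210"
proof -
  have "VV - star1 = {x. x \<subseteq> {2..11::nat} \<and> card x = 4}"
    unfolding star1_def kneser_vertices_def by (auto simp: subset_eq) (metis atLeastAtMost_iff le_antisym not_less_eq_eq numeral_2_eq_2)
  then have "card (VV - star1) = card {2..11::nat} choose 4" using n_subsets[of "{2..11::nat}" 4] by simp
  also have "\<dots> = 210" by (simp add: numeral_eq_Suc)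
  finally show ?thesis .
qed

lemma card_star1: "card star1 = 120"
proof -
  have "star1 \<subseteq> VV" unfolding star1_def by auto
  then have "card (VV - star1) = card VV - card star1" using card_Diff_subset finite_subset VV_fin by blast
  then show ?thesis using card_nonstar card_VV by simp
qed

lemma star1_components: "num_components VV kneser_adj (VV - star1) = 120"
proof -
  have sub: "star1 \<subseteq> VV" unfolding star1_def by auto
  have W: "VV - (VV - star1) = star1" using sub by auto
  have R: "conn_rel kneser_adj star1 = {(x, y). x \<in> star1 \<and> y \<in> star1 \<and> x = y}"
  proof -
    have P: "(\<lambda>a b. a \<in> star1 \<and> b \<in> star1 \<and> kneser_adj a b) = (\<lambda>a b. False)"
      unfolding star1_def kneser_adj_def by (auto simp: fun_eq_iff)
    show ?thesis unfolding conn_rel_def P by (auto simp: rtranclp.rtrancl_refl elim: rtranclp.cases)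
  qed
  have Q: "star1 // conn_rel kneser_adj star1 = (\<lambda>x. {x}) ` star1"
    unfolding R quotient_def by auto
  have "card ((\<lambda>x. {x}) ` star1) = card star1" by (rule card_image) (auto simp: inj_on_def)
  then show ?thesis unfolding num_components_def W Q card_star1 by simp
qed

lemma star1_cut: "vertex_cut VV kneser_adj (VV - star1)"
  unfolding vertex_cut_def using star1_components by auto

lemma star1_ratio: "real (card (VV - star1)) / real (num_components VV kneser_adj (VV - star1)) = 7/4"
  unfolding card_nonstar star1_components by simp

theorem theorem5p3:
  shows "toughness (kneser_vertices 11 4) kneser_adj = 7 / 4 \<and>
    (\<forall>S. vertex_cut (kneser_vertices 11 4) kneser_adj S \<and>
         real (card S) / real (num_components (kneser_vertices 11 4) kneser_adj S) = 7 / 4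
       \<longrightarrow> (\<exists>I. maximum_independent_set (kneser_vertices 11 4) kneser_adj I \<and>
                 S = kneser_vertices 11 4 - I))"
proof (intro conjI allI impI)
  have lb: "7/4 \<le> real (card S) / real (num_components VV kneser_adj S)" if "vertex_cut VV kneser_adj S" for S
  proof -
    have c: "num_components VV kneser_adj S \<ge> 2" using that unfolding vertex_cut_def by auto
    then have pos: "0 < real (num_components VV kneser_adj S)" by simp
    show ?thesis using cut_bound(1)[OF that] by (simp add: pos_le_divide_eq[OF pos])
  qed
  show "toughness VV kneser_adj = 7 / 4"
    unfolding toughness_def
  proof (rule cInf_eq_minimum)
    show "7/4 \<in> {real (card S) / real (num_components VV kneser_adj S) |S. vertex_cut VV kneser_adj S}"
      using star1_cut star1_ratio by (intro CollectI exI[of _ "VV - star1"]) auto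
    fix r assume "r \<in> {real (card S) / real (num_components VV kneser_adj S) |S. vertex_cut VV kneser_adj S}"
    then show "7/4 \<le> r" using lb by auto
  qed
next
  fix S assume h: "vertex_cut VV kneser_adj S \<and> real (card S) / real (num_components VV kneser_adj S) = 7 / 4"
  then have cut: "vertex_cut VV kneser_adj S" and rt: "real (card S) / real (num_components VV kneser_adj S) = 7/4" by auto
  let ?Cl = "(VV - S) // conn_rel kneser_adj (VV - S)"
  have S: "S \<subseteq> VV" and c2: "card ?Cl \<ge> 2" using cut unfolding vertex_cut_def num_components_def by auto
  have W: "VV - S \<subseteq> VV" by auto
  have eqv: "equiv (VV - S) (conn_rel kneser_adj (VV - S))" by (rule conn_equiv[OF W])
  have nc: "num_components VV kneser_adj S = card ?Cl" unfolding num_components_def ..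
  have pos: "0 < real (card ?Cl)" using c2 by simp
  have eq: "real (card S) = 7/4 * real (num_components VV kneser_adj S)"
    using rt pos unfolding nc by (simp add: divide_eq_eq)
  have one: "\<forall>C\<in>?Cl. card C = 1" by (rule cut_bound(2)[OF cut eq])
  define I where "I = VV - S"
  have IV: "I \<subseteq> VV" unfolding I_def by auto
  have SI: "S = VV - I" unfolding I_def using S by auto
  have indep: "independent_set VV kneser_adj I"
    unfolding independent_set_def
  proof (intro conjI IV ballI)
    fix x y assume x: "x \<in> I" and y: "y \<in> I"
    show "\<not> kneser_adj x y"
    proof
      assume adj: "kneser_adj x y"
      have C: "conn_rel kneser_adj (VV - S) `` {x} \<in> ?Cl" using x unfolding I_def by (rule quotientI)
      have xC: "x \<in> conn_rel kneser_adj (VV - S) `` {x}" using equiv_class_self[OF eqv] x unfolding I_def by auto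
      have yC: "y \<in> conn_rel kneser_adj (VV - S) `` {x}"
        using class_closed[OF W C xC] y adj unfolding I_def kneser_adj_def by auto
      have "card (conn_rel kneser_adj (VV - S) `` {x}) = 1" using one C by auto
      then have "x = y" using xC yC by (auto simp: card_Suc_eq)
      then show False using adj VV_nonempty_mem[of x] x IV unfolding kneser_adj_def by auto
    qed
  qed
  have cardI: "card I = card ?Cl"
  proof -
    have finI: "finite I" using IV VV_fin finite_subset by blast
    have "card I = card (\<Union>?Cl)" unfolding I_def Union_quotient[OF eqv] ..
    also have "\<dots> = (\<Sum>C\<in>?Cl. card C)"
    proof (rule card_Union_disjoint)
      show "pairwise disjnt ?Cl" using quotient_disj[OF eqv] unfolding pairwise_def disjnt_def by blast
      show "\<And>C. C \<in> ?Cl \<Longrightarrow> finite C" using class_sub[OF W] finI unfolding I_def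
        by (meson finite_subset)
    qed
    also have "\<dots> = (\<Sum>C\<in>?Cl. 1)" using one by simp
    finally show ?thesis by simp
  qed
  have "card S + card I = 330"
  proof -
    have "card I = card VV - card S" unfolding I_def using card_Diff_subset[OF _ S] S VV_fin finite_subset by blast
    moreover have "card S \<le> card VV" using card_mono[OF VV_fin S] .
    ultimately show ?thesis using card_VV by simp
  qed
  then have "card I = 120" using eq cardI unfolding nc by simp
  have maxI: "maximum_independent_set VV kneser_adj I"
    unfolding maximum_independent_set_def using indep indep_le_120 \<open>card I = 120\<close> by auto
  show "\<exists>I. maximum_independent_set (kneser_vertices 11 4) kneser_adj I \<and> S = kneser_vertices 11 4 - I"
    using maxI SI by blast
qed


end
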